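(* Let $M\subset\mathbb R^n$ be the closure of a bounded domain with $C^1$ boundary $\partial M$, with outward unit normal $\nu(x)$ at $x\in\partial M$, and let $x_1,\dots,x_n$ be the standard coordinates. Fix $T>0$ and $m\ge1$. Let $\phi=(\phi_1,\dots,\phi_m):[0,T]\times M\times\mathbb R^m\to\mathbb R^m$ be such that every compact $U\subset\mathbb R^m$ admits $C_\phi(U)>0$ with $\|\phi(t,x,v_1)-\phi(t,x,v_2)\|\le C_\phi(U)\|v_1-v_2\|$ for all $t\in(0,T)$, $x\in M$, $v_1,v_2\in U$. Let $\zeta_1,\dots,\zeta_n$ be real-valued functions on $[0,T]\times M$. Let $f=(f_1,\dots,f_m)$, where each $f_i(t,x)$ is real-valued, continuous in $t\in[0,T]$, continuously differentiable in $t\in(0,T)$ and twice continuously differentiable in $x\in M$, and satisfies for every $i=1,\dots,m$ $$\frac{\partial}{\partial t}f_i(t,x)=\sum_{j=1}^n\frac{\partial^2}{\partial x_j^2}f_i(t,x)+\sum_{j=1}^n\zeta_j(t,x)\frac{\partial}{\partial x_j}f_i(t,x)+\phi_i(t,x,f(t,x))\quad\text{on }(0,T)\times M.$$ Let $W\subset\mathbb R^m$ be a nonempty closed convex set. Suppose (1) $f(0,x)\in W$ for all $x\in M$, and (2) $\langle\lambda,\phi(t,x,\omega)\rangle\le0$ for all $(t,x,\omega)\in(0,T)\times M\times\partial W$ and every supporting vector $\lambda\in S_\omega W$. If $f(t,x)\notin W$ for some $(t,x)\in(0,T]\times M$, then there exists a maximal distance pair $(t_0,x_0)\in(0,T)\times\partial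 M$ such that $$\frac{\partial}{\partial\nu}\left\langle\lambda(f(t_0,x_0)),f(t_0,x)\right\rangle\Big|_{x=x_0}>0.$$
   Context: $\langle\cdot,\cdot\rangle$ and $\|\cdot\|$ are the standard Euclidean inner product and norm on $\mathbb R^m$; $\frac{\partial}{\partial\nu}$ denotes differentiation in $x$ in the direction $\nu(x)$. For $\omega\in\partial W$, a supporting vector for $W$ at $\omega$ is $\lambda\in\mathbb R^m$ with $\|\lambda\|=1$ and $\langle\lambda,\sigma\rangle\le\langle\lambda,\omega\rangle$ for all $\sigma\in W$; $S_\omega W$ is the set of these. $\operatorname{dist}_Wv$ is the Euclidean distance from $v\in\mathbb R^m$ to $W$, $\omega(v)$ the unique point of $W$ closest to $v$, and $\lambda(v)=v-\omega(v)$. A pair $(t,x)\in[0,T]\times M$ is a maximal distance pair if $\operatorname{dist}_Wf(t,x)=\sup_{y\in M}\operatorname{dist}_Wf(t,y)>0$. *)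

theory Defs
  imports "HOL-Analysis.Analysis"
begin

definition C1_domain_with_normal :: "(real^'n) set \<Rightarrow> (real^'n \<Rightarrow> real^'n) \<Rightarrow> bool" where
  "C1_domain_with_normal \<Omega> \<nu> \<longleftrightarrow>
     open \<Omega> \<and> connected \<Omega> \<and> bounded \<Omega> \<and> \<Omega> \<noteq> {} \<and>
     (\<forall>p\<in>frontier \<Omega>. \<exists>U \<rho> g. open U \<and> p \<in> U \<and>
        (\<forall>y\<in>U. (\<rho> has_derivative (\<lambda>h. g y \<bullet> h)) (at y)) \<and>
        continuous_on U g \<and> (\<forall>y\<in>U. g y \<noteq> 0) \<and>
        \<Omega> \<inter> U = {y\<in>U. \<rho> y < 0} \<and>
        \<nu> p = (1 / norm (g p)) *\<^sub>R g p)"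

definition supporting_vectors :: "('a::real_inner) set \<Rightarrow> 'a \<Rightarrow> 'a set" where
  "supporting_vectors W \<omega> = {l. norm l = 1 \<and> (\<forall>\<sigma>\<in>W. l \<bullet> \<sigma> \<le> l \<bullet> \<omega>)}"

definition lam_vec :: "('a::euclidean_space) set \<Rightarrow> 'a \<Rightarrow> 'a" where
  "lam_vec W v = v - closest_point W v"

definition max_distance_pair ::
  "('a::euclidean_space) set \<Rightarrow> 'b set \<Rightarrow> real \<Rightarrow> (real \<Rightarrow> 'b \<Rightarrow> 'a) \<Rightarrow> real \<Rightarrow> 'b \<Rightarrow> bool" where
  "max_distance_pair W M T f t x \<longleftrightarrow> t \<in> {0..T} \<and> x \<in> M \<and>
     infdist (f t x) W = (SUP y\<in>M. infdist (f t y) W) \<and> infdist (f t x) W > 0"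

end

theory Submission imports Defs begin

lemma line_deriv:
  fixes \<phi> :: "'a::real_normed_vector \<Rightarrow> real"
  assumes "(\<phi> has_derivative D) (at (x0 + s *\<^sub>R h) within M)" "\<forall>s\<in>S. x0 + s *\<^sub>R h \<in> M" "s \<in> S"
  shows "((\<lambda>s. \<phi> (x0 + s *\<^sub>R h)) has_real_derivative D h) (at s within S)"
proof -
  have p: "((\<lambda>s. x0 + s *\<^sub>R h) has_derivative (\<lambda>u. u *\<^sub>R h)) (at s within S)"
    by (auto intro!: derivative_eq_intros)
  have "(\<phi> has_derivative D) (at (x0 + s *\<^sub>R h) within ((\<lambda>s. x0 + s *\<^sub>R h) ` S))"
    using assms(1) by (rule has_derivative_subset) (use assms(2) in auto)
  from has_derivative_in_compose[OF p this]
  have "((\<lambda>s. \<phi> (x0 + s *\<^sub>R h)) has_derivative (\<lambda>u. D (u *\<^sub>R h))) (at s within S)" .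
  moreover have "linear D" using assms(1) has_derivative_linear by blast
  then have "(\<lambda>u. D (u *\<^sub>R h)) = (\<lambda>u. D h * u)" by (auto simp: linear_scale)
  ultimately show ?thesis unfolding has_field_derivative_def by simp
qed

lemma dir1:
  fixes \<phi> :: "'a::real_normed_vector \<Rightarrow> real"
  assumes "x0 \<in> M" "\<forall>x\<in>M. \<phi> x \<le> \<phi> x0" "(\<phi> has_derivative D) (at x0 within M)" "\<delta>>0"
    "\<forall>s\<in>{0..<\<delta>}. x0 + s *\<^sub>R h \<in> M"
  shows "D h \<le> 0"
proof (rule ccontr)
  assume "\<not> D h \<le> 0"
  have "((\<lambda>s. \<phi> (x0 + s *\<^sub>R h)) has_real_derivative D h) (at 0 within {0..<\<delta>})"
    by (rule line_deriv) (use assms in auto)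
  from has_real_derivative_pos_inc_right[OF this] \<open>\<not> D h \<le> 0\<close>
  obtain d where d: "d>0" "\<forall>hh>0. 0 + hh \<in> {0..<\<delta>} \<longrightarrow> hh < d \<longrightarrow> \<phi> (x0 + 0 *\<^sub>R h) < \<phi> (x0 + hh *\<^sub>R h)"
    by auto
  let ?s = "min d \<delta> / 2"
  have "\<phi> x0 < \<phi> (x0 + ?s *\<^sub>R h)" using d assms(4) by auto
  moreover have "x0 + ?s *\<^sub>R h \<in> M" using assms(4,5) d by auto
  ultimately show False using assms(2) by fastforce
qed

lemma dir2:
  fixes \<phi> :: "'a::real_normed_vector \<Rightarrow> real"
  assumes "x0 \<in> M" "\<forall>x\<in>M. \<phi> x \<le> \<phi> x0" "\<And>y. y \<in> M \<Longrightarrow> (\<phi> has_derivative D y) (at y within M)"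
    "((\<lambda>y. D y h) has_derivative Q) (at x0 within M)" "D x0 h = 0" "\<delta>>0"
    "\<forall>s\<in>{0..<\<delta>}. x0 + s *\<^sub>R h \<in> M"
  shows "Q h \<le> 0"
proof (rule ccontr)
  assume "\<not> Q h \<le> 0"
  have "((\<lambda>s. D (x0 + s *\<^sub>R h) h) has_real_derivative Q h) (at 0 within {0..<\<delta>})"
    by (rule line_deriv) (use assms in auto)
  from has_real_derivative_pos_inc_right[OF this] \<open>\<not> Q h \<le> 0\<close> assms(5)
  obtain d where d: "d>0" "\<forall>hh>0. hh \<in> {0..<\<delta>} \<longrightarrow> hh < d \<longrightarrow> 0 < D (x0 + hh *\<^sub>R h) h"
    by auto
  let ?s = "min d \<delta> / 2"
  have s: "0 < ?s" "?s < \<delta>" "?s < d" using d assms(6) by auto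
  have "\<exists>x\<in>{0<..<?s}. \<phi> (x0 + ?s *\<^sub>R h) - \<phi> (x0 + 0 *\<^sub>R h) = (\<lambda>u. D (x0 + x *\<^sub>R h) h * u) (?s - 0)"
  proof (rule mvt_simple)
    fix x assume x: "0 \<le> x" "x \<le> ?s"
    have "((\<lambda>s. \<phi> (x0 + s *\<^sub>R h)) has_real_derivative D (x0 + x *\<^sub>R h) h) (at x within {0..?s})"
      by (rule line_deriv[where M=M]) (use assms x s in auto)
    then show "((\<lambda>s. \<phi> (x0 + s *\<^sub>R h)) has_derivative (\<lambda>u. D (x0 + x *\<^sub>R h) h * u)) (at x within {0..?s})"
      unfolding has_field_derivative_def .
  qed (use s in auto)
  then obtain x where x: "0 < x" "x < ?s" "\<phi> (x0 + ?s *\<^sub>R h) - \<phi> x0 = D (x0 + x *\<^sub>R h) h * ?s" by auto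
  have "0 < D (x0 + x *\<^sub>R h) h" using d x s by auto
  then have "\<phi> x0 < \<phi> (x0 + ?s *\<^sub>R h)" using x s by (simp add: algebra_simps) (smt (verit) mult_pos_pos)
  moreover have "x0 + ?s *\<^sub>R h \<in> M" using assms(7) s by auto
  ultimately show False using assms(2) by fastforce
qed

lemma bdry_adm:
  fixes \<Omega> :: "(real^'n) set"
  assumes dom: "C1_domain_with_normal \<Omega> \<nu>" and p: "p \<in> frontier \<Omega>"
  shows "norm (\<nu> p) = 1" and "\<And>h. h \<bullet> \<nu> p < 0 \<Longrightarrow> \<exists>\<delta>>0. \<forall>s\<in>{0..<\<delta>}. p + s *\<^sub>R h \<in> closure \<Omega>"
proof -
  obtain U \<rho> g where U: "open U" "p \<in> U" and der: "\<forall>y\<in>U. (\<rho> has_derivative (\<lambda>h. g y \<bullet> h)) (at y)"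
    and gnz: "\<forall>y\<in>U. g y \<noteq> 0" and OU: "\<Omega> \<inter> U = {y\<in>U. \<rho> y < 0}"
    and nu: "\<nu> p = (1 / norm (g p)) *\<^sub>R g p"
    using dom p unfolding C1_domain_with_normal_def by meson
  have gp: "g p \<noteq> 0" using gnz U by auto
  then show "norm (\<nu> p) = 1" using nu by simp
  fix h assume h: "h \<bullet> \<nu> p < 0"
  have gh: "g p \<bullet> h < 0"
  proof -
    have "h \<bullet> \<nu> p = (1 / norm (g p)) * (g p \<bullet> h)" using nu by (simp add: inner_commute)
    with h gp show ?thesis by (simp add: divide_less_0_iff)
  qed
  obtain e2 where e2: "e2 > 0" "ball p e2 \<subseteq> U" using U open_contains_ball by blast
  have pcl: "p \<in> closure \<Omega>" using p frontier_def by blast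
  have rp: "\<rho> p \<le> 0"
  proof (rule ccontr)
    assume "\<not> \<rho> p \<le> 0"
    have "continuous (at p) \<rho>" using der U has_derivative_continuous by blast
    then obtain e where e: "e>0" "\<forall>y. dist y p < e \<longrightarrow> dist (\<rho> y) (\<rho> p) < \<rho> p"
      using \<open>\<not> \<rho> p \<le> 0\<close> unfolding continuous_at_eps_delta by (meson not_le)
    obtain y where y: "y \<in> \<Omega>" "dist y p < min e e2" using pcl closure_approachable
      by (metis e(1) e2(1) min_less_iff_conj)
    have "y \<in> U" using y e2 by (auto simp: dist_commute)
    then have "\<rho> y < 0" using OU y by auto
    moreover have "dist (\<rho> y) (\<rho> p) < \<rho> p" using e y by auto
    ultimately show False by (simp add: dist_real_def)
  qed
  have "((\<lambda>s. \<rho> (p + s *\<^sub>R h)) has_real_derivative g p \<bullet> h) (at 0 within UNIV)"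
    by (rule line_deriv[where M=UNIV]) (use der U in auto)
  from DERIV_neg_dec_right[OF this gh]
  obtain d where d: "d>0" "\<forall>hh>0. hh < d \<longrightarrow> \<rho> (p + hh *\<^sub>R h) < \<rho> p" by auto
  define \<delta> where "\<delta> = min d (e2 / (norm h + 1))"
  have hp: "norm h + 1 > 0" by (smt (verit) norm_ge_zero)
  then have "\<delta> > 0" using d e2 by (simp add: \<delta>_def)
  moreover have "\<forall>s\<in>{0..<\<delta>}. p + s *\<^sub>R h \<in> closure \<Omega>"
  proof
    fix s assume s: "s \<in> {0..<\<delta>}"
    show "p + s *\<^sub>R h \<in> closure \<Omega>"
    proof (cases "s = 0")
      case True then show ?thesis using pcl by simp
    next
      case False
      then have s0: "s > 0" using s by auto
      have "s * norm h < e2"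
      proof -
        have "s * norm h \<le> s * (norm h + 1)" using s0 by simp
        also have "\<dots> < e2 / (norm h + 1) * (norm h + 1)"
          using s by (intro mult_strict_right_mono) (use hp in \<open>auto simp: \<delta>_def\<close>)
        also have "\<dots> = e2" using hp by simp
        finally show ?thesis .
      qed
      then have "p + s *\<^sub>R h \<in> U" using e2 s0 by (auto simp: dist_norm)
      moreover have "\<rho> (p + s *\<^sub>R h) < 0" using d s0 s rp by (auto simp: \<delta>_def)
      ultimately have "p + s *\<^sub>R h \<in> \<Omega>" using OU by blast
      then show ?thesis using closure_subset by blast
    qed
  qed
  ultimately show "\<exists>\<delta>>0. \<forall>s\<in>{0..<\<delta>}. p + s *\<^sub>R h \<in> closure \<Omega>" by blast
qed

lemma chi_inner: "(\<chi> j. a j) \<bullet> (h::real^'n) = (\<Sum>j\<in>UNIV. a j * h $ j)"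
  by (simp add: inner_vec_def)

lemma spatial:
  fixes \<phi> :: "real^'n \<Rightarrow> real" and G :: "real^'n \<Rightarrow> real^'n" and H :: "'n \<Rightarrow> 'n \<Rightarrow> real"
  assumes x0: "x0 \<in> M" and mx: "\<forall>x\<in>M. \<phi> x \<le> \<phi> x0"
    and dphi: "\<And>y. y \<in> M \<Longrightarrow> (\<phi> has_derivative (\<lambda>h. G y \<bullet> h)) (at y within M)"
    and dG: "\<And>j. ((\<lambda>y. G y $ j) has_derivative (\<lambda>h. \<Sum>k\<in>UNIV. h $ k * H j k)) (at x0 within M)"
    and n1: "norm n = 1" and Gn: "G x0 \<bullet> n \<le> 0"
    and adm: "\<And>h. h \<bullet> n < 0 \<Longrightarrow> \<exists>\<delta>>0. \<forall>s\<in>{0..<\<delta>}. x0 + s *\<^sub>R h \<in> M"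
  shows "G x0 = 0" and "\<And>i. H i i \<le> 0"
proof -
  have nn: "n \<bullet> n = 1" using n1 by (simp add: norm_eq_1)
  have g1: "G x0 \<bullet> h \<le> 0" if hn: "h \<bullet> n < 0" for h
  proof -
    obtain \<delta> where "\<delta> > 0" "\<forall>s\<in>{0..<\<delta>}. x0 + s *\<^sub>R h \<in> M" using adm[OF hn] by blast
    then show ?thesis using dir1[OF x0 mx dphi[OF x0]] by blast
  qed
  have g2: "G x0 \<bullet> v \<le> ((v \<bullet> n) + 1) * (G x0 \<bullet> n)" for v
  proof -
    have "(v - ((v \<bullet> n) + 1) *\<^sub>R n) \<bullet> n < 0" using nn by (simp add: algebra_simps)
    from g1[OF this] show ?thesis by (simp add: algebra_simps)
  qed
  have "G x0 \<bullet> n \<ge> 0"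
    using g2[of "G x0"] g2[of "- G x0"] by (simp add: algebra_simps)
  then have Gn0: "G x0 \<bullet> n = 0" using Gn by simp
  have "G x0 \<bullet> G x0 \<le> 0" using g2[of "G x0"] Gn0 by simp
  then show G0: "G x0 = 0" by (metis inner_gt_zero_iff not_le)
  define Q where "Q h = (\<Sum>j\<in>UNIV. (\<Sum>k\<in>UNIV. h $ k * H j k) * h $ j)" for h
  have q1: "Q h \<le> 0" if hn: "h \<bullet> n < 0" for h
  proof -
    obtain \<delta> where d: "\<delta> > 0" "\<forall>s\<in>{0..<\<delta>}. x0 + s *\<^sub>R h \<in> M" using adm[OF hn] by blast
    have "((\<lambda>y. G y \<bullet> h) has_derivative (\<lambda>h'. \<Sum>j\<in>UNIV. (\<Sum>k\<in>UNIV. h' $ k * H j k) * h $ j)) (at x0 within M)"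
      unfolding inner_vec_def inner_real_def
      by (auto intro!: derivative_eq_intros dG)
    from dir2[OF x0 mx dphi this _ d] G0 show ?thesis by (simp add: Q_def)
  qed
  have qneg: "Q (- h) = Q h" for h by (simp add: Q_def sum_negf)
  fix i
  define e :: "real^'n" where "e = axis i 1"
  have Qe: "Q e = H i i"
    by (simp add: Q_def e_def axis_def of_bool_def[symmetric])
  have "Q e \<le> 0"
  proof (cases "e \<bullet> n > 0")
    case True
    then have "(- e) \<bullet> n < 0" by simp
    then show ?thesis using q1 qneg by metis
  next
    case False
    have lim: "((\<lambda>\<epsilon>. Q (e - \<epsilon> *\<^sub>R n)) \<longlongrightarrow> Q (e - 0 *\<^sub>R n)) (at_right 0)"
      unfolding Q_def by (intro tendsto_intros)
    have ev: "eventually (\<lambda>\<epsilon>. Q (e - \<epsilon> *\<^sub>R n) \<le> 0) (at_right (0::real))"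
      using eventually_at_right_less
    proof (rule eventually_mono)
      fix \<epsilon> :: real assume "0 < \<epsilon>"
      then have "(e - \<epsilon> *\<^sub>R n) \<bullet> n < 0" using False nn by (simp add: algebra_simps)
      then show "Q (e - \<epsilon> *\<^sub>R n) \<le> 0" by (rule q1)
    qed
    show ?thesis using tendsto_upperbound[OF lim ev] by simp
  qed
  then show "H i i \<le> 0" using Qe by simp
qed

theorem theorem2:
  fixes \<Omega> M :: "(real^'n) set" and \<nu> :: "real^'n \<Rightarrow> real^'n" and T :: real
    and \<phi> :: "real \<Rightarrow> real^'n \<Rightarrow> real^'m \<Rightarrow> real^'m"
    and \<zeta> :: "'n \<Rightarrow> real \<Rightarrow> real^'n \<Rightarrow> real"
    and f ft :: "real \<Rightarrow> real^'n \<Rightarrow> real^'m"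
    and Df :: "real \<Rightarrow> real^'n \<Rightarrow> 'n \<Rightarrow> real^'m"
    and D2f :: "real \<Rightarrow> real^'n \<Rightarrow> 'n \<Rightarrow> 'n \<Rightarrow> real^'m"
    and W :: "(real^'m) set"
  assumes dom: "C1_domain_with_normal \<Omega> \<nu>"
    and M_def: "M = closure \<Omega>"
    and T_pos: "T > 0"
    and phi_lip: "\<And>U. compact U \<Longrightarrow> \<exists>C>0. \<forall>t\<in>{0<..<T}. \<forall>x\<in>M. \<forall>v1\<in>U. \<forall>v2\<in>U.
                     norm (\<phi> t x v1 - \<phi> t x v2) \<le> C * norm (v1 - v2)"
    and f_cont: "continuous_on ({0..T} \<times> M) (\<lambda>(t, x). f t x)"
    and ft_deriv: "\<And>t x. t \<in> {0<..<T} \<Longrightarrow> x \<in> M \<Longrightarrow>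
                     ((\<lambda>s. f s x) has_vector_derivative ft t x) (at t)"
    and ft_cont: "continuous_on ({0<..<T} \<times> M) (\<lambda>(t, x). ft t x)"
    and Df_deriv: "\<And>t x. t \<in> {0<..<T} \<Longrightarrow> x \<in> M \<Longrightarrow>
                     (f t has_derivative (\<lambda>h. \<Sum>j\<in>UNIV. h $ j *\<^sub>R Df t x j)) (at x within M)"
    and D2f_deriv: "\<And>t x j. t \<in> {0<..<T} \<Longrightarrow> x \<in> M \<Longrightarrow>
                     ((\<lambda>y. Df t y j) has_derivative (\<lambda>h. \<Sum>k\<in>UNIV. h $ k *\<^sub>R D2f t x j k)) (at x within M)"
    and Df_cont: "\<And>j. continuous_on ({0<..<T} \<times> M) (\<lambda>(t, x). Df t x j)"
    and D2f_cont: "\<And>j k. continuous_on ({0<..<T} \<times> M) (\<lambda>(t, x). D2f t x j k)"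
    and pde: "\<And>t x. t \<in> {0<..<T} \<Longrightarrow> x \<in> M \<Longrightarrow>
                ft t x = (\<Sum>j\<in>UNIV. D2f t x j j) + (\<Sum>j\<in>UNIV. \<zeta> j t x *\<^sub>R Df t x j) + \<phi> t x (f t x)"
    and W_ne: "W \<noteq> {}" and W_closed: "closed W" and W_convex: "convex W"
    and init: "\<And>x. x \<in> M \<Longrightarrow> f 0 x \<in> W"
    and tangency: "\<And>t x \<omega> l. t \<in> {0<..<T} \<Longrightarrow> x \<in> M \<Longrightarrow> \<omega> \<in> frontier W \<Longrightarrow>
                     l \<in> supporting_vectors W \<omega> \<Longrightarrow> l \<bullet> \<phi> t x \<omega> \<le> 0"
    and leaves: "\<exists>t\<in>{0<..T}. \<exists>x\<in>M. f t x \<notin> W"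
  shows "\<exists>t0\<in>{0<..<T}. \<exists>x0\<in>frontier M. max_distance_pair W M T f t0 x0 \<and>
           (\<exists>D. ((\<lambda>x. lam_vec W (f t0 x0) \<bullet> f t0 x) has_derivative D) (at x0 within M)
                 \<and> D (\<nu> x0) > 0)"
proof (rule ccontr)
  assume nc: "\<not> ?thesis"
  have Mc: "compact M" using dom M_def unfolding C1_domain_with_normal_def by simp
  have Mne: "M \<noteq> {}" using dom M_def closure_subset unfolding C1_domain_with_normal_def by blast
  define S where "S = {0..T} \<times> M"
  define FS where "FS = (\<lambda>(t, x). f t x) ` S"
  have FSc: "compact FS" unfolding FS_def S_def
    by (rule compact_continuous_image[OF f_cont]) (simp add: compact_Times Mc)
  define U where "U = FS \<union> closest_point W ` FS"
  have Uc: "compact U" unfolding U_def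
    by (intro compact_Un FSc compact_continuous_image continuous_on_closest_point W_convex W_closed W_ne)
  obtain C where C: "C > 0" and lip: "\<forall>t\<in>{0<..<T}. \<forall>x\<in>M. \<forall>v1\<in>U. \<forall>v2\<in>U.
                     norm (\<phi> t x v1 - \<phi> t x v2) \<le> C * norm (v1 - v2)"
    using phi_lip[OF Uc] by blast
  define K where "K = C + 1"
  have fU: "f t x \<in> U" if "t \<in> {0..T}" "x \<in> M" for t x
    using that unfolding U_def FS_def S_def by force
  have cU: "closest_point W (f t x) \<in> U" if "t \<in> {0..T}" "x \<in> M" for t x
    using that unfolding U_def FS_def S_def by force
  obtain t1 x1 where t1: "t1 \<in> {0<..<T}" and x1: "x1 \<in> M" and fx1: "f t1 x1 \<notin> W"
  proof -
    obtain t x where t: "t \<in> {0<..T}" and x: "x \<in> M" and fx: "f t x \<notin> W" using leaves by blast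
    show ?thesis
    proof (cases "t < T")
      case True then show ?thesis using that t x fx by auto
    next
      case False
      then have tT: "t = T" using t by auto
      have cont: "continuous_on {0..T} (\<lambda>s. f s x)"
        using x by (intro continuous_on_compose2[OF f_cont, of "{0..T}" "\<lambda>s. (s, x)", simplified])
          (auto intro!: continuous_intros)
      have e: "infdist (f T x) W > 0" using infdist_pos_not_in_closed[OF W_closed W_ne] fx tT by simp
      obtain d where d: "d > 0" "\<forall>s\<in>{0..T}. dist s T < d \<longrightarrow> dist (f s x) (f T x) < infdist (f T x) W"
        using cont e T_pos unfolding continuous_on_iff by (meson atLeastAtMost_iff less_eq_real_def)
      define s where "s = max (T/2) (T - d/2)"
      have s: "s \<in> {0<..<T}" "dist s T < d" using d T_pos by (auto simp: s_def dist_real_def)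
      have "f s x \<notin> W"
      proof
        assume "f s x \<in> W"
        then have "infdist (f T x) W \<le> dist (f T x) (f s x)" by (rule infdist_le)
        moreover have "dist (f s x) (f T x) < infdist (f T x) W" using d s by auto
        ultimately show False by (simp add: dist_commute)
      qed
      then show ?thesis using that s x by auto
    qed
  qed
  define Fn where "Fn z = exp (- K * fst z) * infdist (f (fst z) (snd z)) W" for z
  have fc': "continuous_on ({0..t1} \<times> M) (\<lambda>z. f (fst z) (snd z))"
    using continuous_on_subset[OF f_cont, of "{0..t1} \<times> M"] t1 by (auto simp: case_prod_unfold mem_Times_iff subset_iff)
  have "continuous_on ({0..t1} \<times> M) Fn" unfolding Fn_def
    by (intro continuous_intros fc')
  then obtain z where z: "z \<in> {0..t1} \<times> M" and zmax: "\<forall>y\<in>{0..t1} \<times> M. Fn y \<le> Fn z"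
    using continuous_attains_sup[of "{0..t1} \<times> M" Fn] Mne Mc t1 by (auto simp: compact_Times)
  define \<tau> where "\<tau> = fst z"
  define x0 where "x0 = snd z"
  have zeq: "z = (\<tau>, x0)" by (simp add: \<tau>_def x0_def)
  have x0M: "x0 \<in> M" and \<tau>t1: "\<tau> \<in> {0..t1}" using z zeq by auto
  have "Fn (t1, x1) > 0" using infdist_pos_not_in_closed[OF W_closed W_ne fx1] by (simp add: Fn_def)
  moreover have "Fn (t1, x1) \<le> Fn z" using zmax x1 t1 by auto
  ultimately have Fpos: "Fn (\<tau>, x0) > 0" using zeq by simp
  then have dpos: "infdist (f \<tau> x0) W > 0" by (simp add: Fn_def zero_less_mult_iff)
  have "\<tau> \<noteq> 0" using dpos init[OF x0M] by auto
  then have \<tau>: "\<tau> \<in> {0<..<T}" using \<tau>t1 t1 by auto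
  have xmax: "infdist (f \<tau> x) W \<le> infdist (f \<tau> x0) W" if "x \<in> M" for x
  proof -
    have "Fn (\<tau>, x) \<le> Fn (\<tau>, x0)" using zmax zeq \<tau>t1 that by auto
    then show ?thesis by (simp add: Fn_def)
  qed
  have mdp: "max_distance_pair W M T f \<tau> x0"
    unfolding max_distance_pair_def
    using \<tau> x0M dpos xmax by (auto intro!: cSup_eq_maximum[symmetric])
  define \<omega> where "\<omega> = closest_point W (f \<tau> x0)"
  define l where "l = lam_vec W (f \<tau> x0)"
  have l_eq: "l = f \<tau> x0 - \<omega>" by (simp add: l_def \<omega>_def lam_vec_def)
  have \<omega>W: "\<omega> \<in> W" unfolding \<omega>_def by (rule closest_point_in_set[OF W_closed W_ne])
  have idist: "infdist z W = norm (z - closest_point W z)" for z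
    by (simp add: infdist_eq_setdist setdist_closest_point W_closed W_ne dist_norm)
  have dl: "infdist (f \<tau> x0) W = norm l" using idist l_eq \<omega>_def by simp
  have lpos: "norm l > 0" using dl dpos by simp
  have half: "l \<bullet> y \<le> l \<bullet> \<omega>" if "y \<in> W" for y
    using closest_point_dot[OF W_convex W_closed that, of "f \<tau> x0"]
    by (simp add: l_eq \<omega>_def[symmetric] inner_diff_right)
  have hb: "l \<bullet> (z - \<omega>) \<le> norm l * infdist z W" for z
  proof -
    define c where "c = closest_point W z"
    have cW: "c \<in> W" unfolding c_def by (rule closest_point_in_set[OF W_closed W_ne])
    have "l \<bullet> (z - \<omega>) = l \<bullet> (z - c) + (l \<bullet> c - l \<bullet> \<omega>)" by (simp add: inner_diff_right)
    also have "\<dots> \<le> l \<bullet> (z - c)" using half[OF cW] by simp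
    also have "\<dots> \<le> norm l * norm (z - c)" by (rule norm_cauchy_schwarz)
    finally show ?thesis using idist c_def by simp
  qed
  have ll: "l \<bullet> (f \<tau> x0 - \<omega>) = norm l ^ 2" by (simp add: l_eq[symmetric] power2_norm_eq_inner)
  define G where "G y = (\<chi> j. l \<bullet> Df \<tau> y j)" for y
  define H where "H j k = l \<bullet> D2f \<tau> x0 j k" for j k
  have dphi: "((\<lambda>x. l \<bullet> f \<tau> x) has_derivative (\<lambda>h. G y \<bullet> h)) (at y within M)" if "y \<in> M" for y
  proof (rule has_derivative_eq_rhs)
    show "((\<lambda>x. l \<bullet> f \<tau> x) has_derivative (\<lambda>h. l \<bullet> (\<Sum>j\<in>UNIV. h $ j *\<^sub>R Df \<tau> y j))) (at y within M)"
      by (rule bounded_linear.has_derivative[OF bounded_linear_inner_right Df_deriv[OF \<tau> that]])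
    show "(\<lambda>h. l \<bullet> (\<Sum>j\<in>UNIV. h $ j *\<^sub>R Df \<tau> y j)) = (\<lambda>h. G y \<bullet> h)"
      by (auto simp: G_def inner_sum_right chi_inner mult.commute)
  qed
  have dG: "((\<lambda>y. G y $ j) has_derivative (\<lambda>h. \<Sum>k\<in>UNIV. h $ k * H j k)) (at x0 within M)" for j
  proof (rule has_derivative_eq_rhs)
    show "((\<lambda>y. G y $ j) has_derivative (\<lambda>h. l \<bullet> (\<Sum>k\<in>UNIV. h $ k *\<^sub>R D2f \<tau> x0 j k))) (at x0 within M)"
      unfolding G_def vec_lambda_beta
      by (rule bounded_linear.has_derivative[OF bounded_linear_inner_right D2f_deriv[OF \<tau> x0M]])
    show "(\<lambda>h. l \<bullet> (\<Sum>k\<in>UNIV. h $ k *\<^sub>R D2f \<tau> x0 j k)) = (\<lambda>h. \<Sum>k\<in>UNIV. h $ k * H j k)"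
      by (auto simp: H_def inner_sum_right)
  qed
  have mx: "\<forall>x\<in>M. l \<bullet> f \<tau> x \<le> l \<bullet> f \<tau> x0"
  proof
    fix x assume x: "x \<in> M"
    have "l \<bullet> (f \<tau> x - \<omega>) \<le> norm l * infdist (f \<tau> x) W" by (rule hb)
    also have "\<dots> \<le> norm l * norm l" using xmax[OF x] dl lpos by simp
    also have "\<dots> = l \<bullet> (f \<tau> x0 - \<omega>)" using ll by (simp add: power2_eq_square)
    finally show "l \<bullet> f \<tau> x \<le> l \<bullet> f \<tau> x0" by (simp add: inner_diff_right)
  qed
  have sp: "G x0 = 0 \<and> (\<forall>i. H i i \<le> 0)"
  proof (cases "x0 \<in> interior M")
    case True
    then obtain e where e: "e > 0" "ball x0 e \<subseteq> M" using mem_interior by blast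
    obtain k :: 'n where True by simp
    define n :: "real^'n" where "n = (if G x0 \<bullet> axis k 1 \<le> 0 then axis k 1 else - axis k 1)"
    have n1: "norm n = 1" by (simp add: n_def)
    have Gn: "G x0 \<bullet> n \<le> 0" by (auto simp: n_def)
    have adm: "\<exists>\<delta>>0. \<forall>s\<in>{0..<\<delta>}. x0 + s *\<^sub>R h \<in> M" for h
    proof -
      have hp: "norm h + 1 > 0" by (smt (verit) norm_ge_zero)
      have "\<forall>s\<in>{0..<e / (norm h + 1)}. x0 + s *\<^sub>R h \<in> M"
      proof
        fix s assume s: "s \<in> {0..<e / (norm h + 1)}"
        have "s * norm h \<le> s * (norm h + 1)" using s by (simp add: distrib_left)
        also have "\<dots> < e / (norm h + 1) * (norm h + 1)"
          using s hp by (intro mult_strict_right_mono) auto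
        also have "\<dots> = e" using hp by simp
        finally have "norm (s *\<^sub>R h) < e" using s by simp
        then show "x0 + s *\<^sub>R h \<in> M" using e by (auto simp: dist_norm)
      qed
      then show ?thesis using e hp by (intro exI[of _ "e / (norm h + 1)"]) auto
    qed
    show ?thesis using spatial[OF x0M mx dphi dG n1 Gn adm] by blast
  next
    case False
    have "closed M" using M_def by simp
    then have "x0 \<in> frontier M" using False x0M by (simp add: frontier_def)
    then have x0fr: "x0 \<in> frontier \<Omega>" using M_def frontier_closures
      by (metis (no_types, lifting) Int_iff closure_closure closure_mono compl_le_compl_iff closure_subset subsetD)
    have n1: "norm (\<nu> x0) = 1" using bdry_adm(1)[OF dom x0fr] .
    have adm: "\<exists>\<delta>>0. \<forall>s\<in>{0..<\<delta>}. x0 + s *\<^sub>R h \<in> M" if "h \<bullet> \<nu> x0 < 0" for h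
      using bdry_adm(2)[OF dom x0fr that] M_def by simp
    have Gn: "G x0 \<bullet> \<nu> x0 \<le> 0"
    proof (rule ccontr)
      assume "\<not> G x0 \<bullet> \<nu> x0 \<le> 0"
      then have "\<exists>D. ((\<lambda>x. lam_vec W (f \<tau> x0) \<bullet> f \<tau> x) has_derivative D) (at x0 within M) \<and> D (\<nu> x0) > 0"
        using dphi[OF x0M] unfolding l_def by (intro exI[of _ "\<lambda>h. G x0 \<bullet> h"]) auto
      then show False using nc \<tau> \<open>x0 \<in> frontier M\<close> mdp by blast
    qed
    show ?thesis using spatial[OF x0M mx dphi dG n1 Gn adm] by blast
  qed
  have G0: "G x0 = 0" and Hn: "\<And>i. H i i \<le> 0" using sp by auto
  have lDf: "l \<bullet> Df \<tau> x0 j = 0" for j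
    using G0 unfolding G_def by (metis vec_lambda_beta zero_index)
  have \<omega>fr: "\<omega> \<in> frontier W"
  proof -
    have "\<omega> \<notin> interior W"
    proof
      assume "\<omega> \<in> interior W"
      then obtain e where e: "e > 0" "ball \<omega> e \<subseteq> W" using mem_interior by blast
      define y where "y = \<omega> + (e / 2 / norm l) *\<^sub>R l"
      have "dist \<omega> y = e / 2" using lpos e by (simp add: y_def dist_norm)
      then have "y \<in> W" using e by auto
      have l2: "l \<bullet> l = norm l * norm l" by (simp add: power2_norm_eq_inner[symmetric] power2_eq_square)
      have "l \<bullet> y = l \<bullet> \<omega> + (e / 2 / norm l) * (l \<bullet> l)" by (simp add: y_def inner_add_right)
      also have "(e / 2 / norm l) * (l \<bullet> l) = e / 2 * norm l" using lpos l2 by simp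
      finally have ly: "l \<bullet> y = l \<bullet> \<omega> + e / 2 * norm l" .
      have "e / 2 * norm l > 0" using e lpos by simp
      then show False using half[OF \<open>y \<in> W\<close>] ly by linarith
    qed
    then show ?thesis using \<omega>W closure_subset by (auto simp: frontier_def)
  qed
  define u where "u = (1 / norm l) *\<^sub>R l"
  have usv: "u \<in> supporting_vectors W \<omega>"
    unfolding supporting_vectors_def u_def using lpos half
    by (auto intro!: divide_right_mono simp: divide_inverse mult_le_cancel_left_pos)
  have tg: "u \<bullet> \<phi> \<tau> x0 \<omega> \<le> 0" by (rule tangency[OF \<tau> x0M \<omega>fr usv])
  have lphi0: "l \<bullet> \<phi> \<tau> x0 \<omega> \<le> 0"
  proof -
    have "l = norm l *\<^sub>R u" using lpos by (simp add: u_def)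
    then have "l \<bullet> \<phi> \<tau> x0 \<omega> = norm l * (u \<bullet> \<phi> \<tau> x0 \<omega>)" by (metis inner_scaleR_left)
    then show ?thesis using tg lpos by (simp add: mult_nonneg_nonpos)
  qed
  have \<tau>T: "\<tau> \<in> {0..T}" using \<tau> by auto
  have lip1: "norm (\<phi> \<tau> x0 (f \<tau> x0) - \<phi> \<tau> x0 \<omega>) \<le> C * norm l"
    using lip \<tau> x0M fU[OF \<tau>T x0M] cU[OF \<tau>T x0M] by (simp add: \<omega>_def[symmetric] l_eq)
  have lphi: "l \<bullet> \<phi> \<tau> x0 (f \<tau> x0) \<le> C * norm l ^ 2"
  proof -
    have "l \<bullet> \<phi> \<tau> x0 (f \<tau> x0) = l \<bullet> \<phi> \<tau> x0 \<omega> + l \<bullet> (\<phi> \<tau> x0 (f \<tau> x0) - \<phi> \<tau> x0 \<omega>)"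
      by (simp add: inner_diff_right)
    also have "\<dots> \<le> 0 + norm l * norm (\<phi> \<tau> x0 (f \<tau> x0) - \<phi> \<tau> x0 \<omega>)"
      using lphi0 norm_cauchy_schwarz by (intro add_mono) auto
    also have "\<dots> \<le> norm l * (C * norm l)" using lip1 lpos by (simp add: mult_left_mono)
    finally show ?thesis by (simp add: power2_eq_square mult.commute mult.left_commute)
  qed
  have lft: "l \<bullet> ft \<tau> x0 \<le> C * norm l ^ 2"
  proof -
    have "l \<bullet> ft \<tau> x0 = (\<Sum>j\<in>UNIV. H j j) + (\<Sum>j\<in>UNIV. \<zeta> j \<tau> x0 * (l \<bullet> Df \<tau> x0 j)) + l \<bullet> \<phi> \<tau> x0 (f \<tau> x0)"
      using pde[OF \<tau> x0M] by (simp add: H_def inner_add_right inner_sum_right)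
    also have "\<dots> = (\<Sum>j\<in>UNIV. H j j) + l \<bullet> \<phi> \<tau> x0 (f \<tau> x0)" by (simp add: lDf)
    also have "\<dots> \<le> 0 + C * norm l ^ 2" using Hn lphi by (intro add_mono sum_nonpos) auto
    finally show ?thesis by simp
  qed
  have da: "((\<lambda>s. l \<bullet> f s x0) has_real_derivative l \<bullet> ft \<tau> x0) (at \<tau>)"
  proof -
    have "((\<lambda>s. f s x0) has_derivative (\<lambda>u. u *\<^sub>R ft \<tau> x0)) (at \<tau>)"
      using ft_deriv[OF \<tau> x0M] by (simp add: has_vector_derivative_def)
    from bounded_linear.has_derivative[OF bounded_linear_inner_right[of l] this]
    have "((\<lambda>s. l \<bullet> f s x0) has_derivative (\<lambda>x. x * (l \<bullet> ft \<tau> x0))) (at \<tau>)" by simp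
    then show ?thesis unfolding has_field_derivative_def
      by (rule has_derivative_eq_rhs) (simp add: fun_eq_iff mult.commute)
  qed
  define b where "b s = exp (- K * s) * (l \<bullet> f s x0 - l \<bullet> \<omega>)" for s
  have db: "(b has_real_derivative exp (- K * \<tau>) * (l \<bullet> ft \<tau> x0) - K * exp (- K * \<tau>) * (l \<bullet> f \<tau> x0 - l \<bullet> \<omega>)) (at \<tau>)"
    unfolding b_def by (auto intro!: derivative_eq_intros da simp: algebra_simps)
  have "l \<bullet> f \<tau> x0 - l \<bullet> \<omega> = norm l ^ 2" using ll by (simp add: inner_diff_right)
  then have "exp (- K * \<tau>) * (l \<bullet> ft \<tau> x0) - K * exp (- K * \<tau>) * (l \<bullet> f \<tau> x0 - l \<bullet> \<omega>)
      = exp (- K * \<tau>) * (l \<bullet> ft \<tau> x0 - K * norm l ^ 2)" by (simp add: algebra_simps)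
  moreover have "l \<bullet> ft \<tau> x0 - K * norm l ^ 2 < 0" proof -
    have "norm l ^ 2 > 0" using lpos by simp
    moreover have "K * norm l ^ 2 = C * norm l ^ 2 + norm l ^ 2" by (simp add: K_def algebra_simps)
    ultimately show ?thesis using lft by linarith
  qed
  ultimately have "exp (- K * \<tau>) * (l \<bullet> ft \<tau> x0) - K * exp (- K * \<tau>) * (l \<bullet> f \<tau> x0 - l \<bullet> \<omega>) < 0"
    by (simp add: mult_pos_neg)
  from DERIV_neg_dec_left[OF db this]
  obtain d where d: "d > 0" "\<forall>h>0. h < d \<longrightarrow> b \<tau> < b (\<tau> - h)" by blast
  define s where "s = \<tau> - min d \<tau> / 2"
  have s: "s \<in> {0..t1}" using \<tau> \<tau>t1 d by (auto simp: s_def)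
  have "b \<tau> < b s" using d \<tau> by (simp add: s_def)
  moreover have "b s \<le> b \<tau>"
  proof -
    have "b s = exp (- K * s) * (l \<bullet> (f s x0 - \<omega>))" by (simp add: b_def inner_diff_right)
    also have "\<dots> \<le> exp (- K * s) * (norm l * infdist (f s x0) W)" using hb by simp
    also have "\<dots> = norm l * Fn (s, x0)" by (simp add: Fn_def)
    also have "\<dots> \<le> norm l * Fn (\<tau>, x0)" using zmax zeq s x0M lpos by (simp add: mult_left_mono)
    also have "\<dots> = exp (- K * \<tau>) * norm l ^ 2" by (simp add: Fn_def dl power2_eq_square)
    also have "\<dots> = b \<tau>" using ll by (simp add: b_def inner_diff_right)
    finally show ?thesis .
  qed
  ultimately show False by simp
qed

end
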